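(* Consider a monopoly SP maximizing social welfare net of investment cost. (1) For a fixed small-cell density $\lambda>1$, the welfare-maximizing bandwidth split coincides with the revenue-maximizing one, $B_S=\frac{\epsilon N_fB}{\epsilon N_f+N_m}$, $B_M=\frac{N_mB}{\epsilon N_f+N_m}$ with $\epsilon=\lambda^{1/\alpha-1}$, with market-clearing prices. (2) Define $$W(\lambda)=\begin{cases}\frac{1}{1-\alpha}(BR_0)^{1-\alpha}(N_m+N_f)^{\alpha}-I_S\lambda, & 0\le\lambda\le 1,\\ \frac{1}{1-\alpha}(BR_0)^{1-\alpha}\big(N_m+\lambda^{\frac1\alpha-1}N_f\big)^{\alpha}-I_S\lambda, & \lambda>1.\end{cases}$$ Every maximizer $\lambda^{\mathrm{sw}}$ of $W$ over $[0,\infty)$ satisfies $\lambda^{\mathrm{sw}}=0$ or $\lambda^{\mathrm{sw}}=\lambda^*$ where $\lambda^*>1$ solves $$N_f(BR_0)^{1-\alpha}(\lambda^* )^{\frac1\alpha-2}\big(N_f(\lambda^* )^{\frac1\alpha-1}+N_m\big)^{\alpha-1}=I_S.$$ (3) If $\lambda^{\mathrm{sw}}$ is a maximizer of $W$ and $\lambda^{\mathrm{rev}}$ is a maximizer of $S$ (defined in the context) with $\lambda^{\mathrm{sw}}>1$ and $\lambda^{\mathrm{rev}}>1$, then $\lambda^{\mathrm{sw}}>\lambda^{\mathrm{rev}}$.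
   Context: Parameters: $\alpha\in(0,1)$; densities $N_m,N_f>0$ of mobile and fixed users; spectral efficiency $R_0>0$; bandwidth $B>0$; cost $I_S>0$ per unit small-cell density. Utility $u(r)=\frac{r^{1-\alpha}}{1-\alpha}$. For fixed density $\lambda$ and split $(B_M,B_S)$ with $B_M+B_S=B$, mobile users are served by macro-cells and fixed users by small-cells at market-clearing prices, giving welfare $N_m u(B_MR_0/N_m)+N_f u(\lambda B_SR_0/N_f)-I_S\lambda$ and revenue $R_0B_M(B_MR_0/N_m)^{-\alpha}+R_0\lambda B_S(\lambda B_SR_0/N_f)^{-\alpha}-I_S\lambda$; for $\lambda\le1$ all bandwidth is used in macro-cells serving all $N_m+N_f$ users. The revenue (net of investment) under the optimal split is $$S(\lambda)=\begin{cases}(BR_0)^{1-\alpha}(N_m+N_f)^{\alpha}-I_S\lambda, & 0\le\lambda\le 1,\\ (BR_0)^{1-\alpha}\big(N_m+\lambda^{\frac1\alpha-1}N_f\big)^{\alpha}-I_S\lambda, & \lambda>1,\end{cases}$$ and $W(\lambda)$ in the claim is the corresponding net social welfare. *)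

theory Defs
  imports Complex_Main
begin

definition util :: "real \<Rightarrow> real \<Rightarrow> real" where
  "util \<alpha> r = r powr (1 - \<alpha>) / (1 - \<alpha>)"

definition welfare_split ::
  "real \<Rightarrow> real \<Rightarrow> real \<Rightarrow> real \<Rightarrow> real \<Rightarrow> real \<Rightarrow> real \<Rightarrow> real \<Rightarrow> real" where
  "welfare_split \<alpha> Nm Nf R0 IS lam BM BS =
     Nm * util \<alpha> (BM * R0 / Nm) + Nf * util \<alpha> (lam * BS * R0 / Nf) - IS * lam"

text \<open>Revenue net of investment for fixed density lam > 1 and split (BM, BS),
  at market-clearing prices.\<close>
definition revenue_split ::
  "real \<Rightarrow> real \<Rightarrow> real \<Rightarrow> real \<Rightarrow> real \<Rightarrow> real \<Rightarrow> real \<Rightarrow> real \<Rightarrow> real" where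
  "revenue_split \<alpha> Nm Nf R0 IS lam BM BS =
     R0 * BM * (BM * R0 / Nm) powr (- \<alpha>)
     + R0 * lam * BS * (lam * BS * R0 / Nf) powr (- \<alpha>) - IS * lam"

definition opt_split :: "(real \<Rightarrow> real \<Rightarrow> real) \<Rightarrow> real \<Rightarrow> real \<Rightarrow> real \<Rightarrow> bool" where
  "opt_split f B BM BS \<longleftrightarrow> 0 \<le> BM \<and> 0 \<le> BS \<and> BM + BS = B \<and>
     (\<forall>x y. 0 \<le> x \<longrightarrow> 0 \<le> y \<longrightarrow> x + y = B \<longrightarrow> f x y \<le> f BM BS)"

definition W_sw :: "real \<Rightarrow> real \<Rightarrow> real \<Rightarrow> real \<Rightarrow> real \<Rightarrow> real \<Rightarrow> real \<Rightarrow> real" where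
  "W_sw \<alpha> Nm Nf R0 B IS lam =
     (if lam \<le> 1 then (1 / (1 - \<alpha>)) * (B * R0) powr (1 - \<alpha>) * (Nm + Nf) powr \<alpha> - IS * lam
      else (1 / (1 - \<alpha>)) * (B * R0) powr (1 - \<alpha>)
             * (Nm + lam powr (1 / \<alpha> - 1) * Nf) powr \<alpha> - IS * lam)"

definition S_rev :: "real \<Rightarrow> real \<Rightarrow> real \<Rightarrow> real \<Rightarrow> real \<Rightarrow> real \<Rightarrow> real \<Rightarrow> real" where
  "S_rev \<alpha> Nm Nf R0 B IS lam =
     (if lam \<le> 1 then (B * R0) powr (1 - \<alpha>) * (Nm + Nf) powr \<alpha> - IS * lam
      else (B * R0) powr (1 - \<alpha>) * (Nm + lam powr (1 / \<alpha> - 1) * Nf) powr \<alpha> - IS * lam)"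

definition is_max_nonneg :: "(real \<Rightarrow> real) \<Rightarrow> real \<Rightarrow> bool" where
  "is_max_nonneg g x \<longleftrightarrow> 0 \<le> x \<and> (\<forall>y. 0 \<le> y \<longrightarrow> g y \<le> g x)"

end

theory Submission
  imports Defs
begin

lemma tangent1:
  fixes p s :: real
  assumes p: "0 < p" "p < 1" and s: "0 \<le> s" "s \<noteq> 1"
  shows "s powr p < 1 + p * (s - 1)"
proof (cases "s = 0")
  case True then show ?thesis using p by simp
next
  case False
  then have sp: "s > 0" using s by simp
  have der: "\<And>x. x > 0 \<Longrightarrow> DERIV (\<lambda>t. t powr p) x :> p * x powr (p - 1)"
    by (rule has_real_derivative_powr)
  show ?thesis
  proof (cases "s < 1")
    case True
    obtain z where z: "s < z" "z < 1" "1 powr p - s powr p = (1 - s) * (p * z powr (p - 1))"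
      using MVT2[OF True, of "\<lambda>t. t powr p" "\<lambda>x. p * x powr (p - 1)"] der sp by force
    have "z powr (p - 1) > 1"
      using powr_less_mono2_neg[of "p - 1" z 1] z sp p by simp
    then have "(1 - s) * (p * z powr (p - 1)) > (1 - s) * p" using True p by simp
    then show ?thesis using z by (simp add: algebra_simps)
  next
    case False
    then have s1: "1 < s" using s by simp
    obtain z where z: "1 < z" "z < s" "s powr p - 1 powr p = (s - 1) * (p * z powr (p - 1))"
      using MVT2[OF s1, of "\<lambda>t. t powr p" "\<lambda>x. p * x powr (p - 1)"] der by force
    have "z powr (p - 1) < 1"
      using z p by (intro powr_less_one) auto
    then have "(s - 1) * (p * z powr (p - 1)) < (s - 1) * p" using s1 p by simp
    then show ?thesis using z by (simp add: algebra_simps)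
  qed
qed

lemma tangent2:
  fixes p t t0 :: real
  assumes p: "0 < p" "p < 1" and t: "0 < t0" "0 \<le> t" "t \<noteq> t0"
  shows "t powr p < t0 powr p + p * t0 powr (p - 1) * (t - t0)"
proof -
  have "(t / t0) powr p < 1 + p * (t / t0 - 1)"
    using tangent1[OF p, of "t / t0"] t by (simp add: divide_nonneg_pos)
  then have "t powr p / t0 powr p < 1 + p * (t / t0 - 1)"
    using t by (simp add: powr_divide)
  then have "t powr p < t0 powr p * (1 + p * (t / t0 - 1))"
    using t by (simp add: divide_less_eq mult.commute)
  also have "t0 powr p * (1 + p * (t / t0 - 1)) = t0 powr p + p * (t0 powr p / t0) * (t - t0)"
    using t by (simp add: field_simps)
  also have "t0 powr p / t0 = t0 powr (p - 1)"
    using t by (simp add: powr_diff)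
  finally show ?thesis .
qed

lemma key_split:
  fixes p a b x0 y0 x y :: real
  assumes p: "0 < p" "p < 1" and ab: "0 < a" "0 < b" and xy0: "0 < x0" "0 < y0"
    and foc: "a * x0 powr (p - 1) = b * y0 powr (p - 1)"
    and xy: "0 \<le> x" "0 \<le> y" "x + y = x0 + y0" "x \<noteq> x0"
  shows "a * x powr p + b * y powr p < a * x0 powr p + b * y0 powr p"
proof -
  have yne: "y \<noteq> y0" using xy by auto
  have 1: "a * x powr p < a * (x0 powr p + p * x0 powr (p - 1) * (x - x0))"
    using tangent2[OF p xy0(1) xy(1) xy(4)] ab by simp
  have 2: "b * y powr p < b * (y0 powr p + p * y0 powr (p - 1) * (y - y0))"
    using tangent2[OF p xy0(2) xy(2) yne] ab by simp
  have "a * (p * x0 powr (p - 1) * (x - x0)) + b * (p * y0 powr (p - 1) * (y - y0))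
        = p * (a * x0 powr (p - 1)) * (x - x0) + p * (b * y0 powr (p - 1)) * (y - y0)"
    by (simp add: algebra_simps)
  also have "\<dots> = p * (a * x0 powr (p - 1)) * ((x - x0) + (y - y0))"
    unfolding foc by (simp add: algebra_simps)
  also have "\<dots> = 0" using xy by simp
  finally have "a * (p * x0 powr (p - 1) * (x - x0)) + b * (p * y0 powr (p - 1) * (y - y0)) = 0" .
  then show ?thesis using 1 2 by (simp add: algebra_simps)
qed

lemma foc_eq:
  fixes \<alpha> Nm Nf R0 B lam :: real
  assumes "0 < \<alpha>" "\<alpha> < 1" "0 < Nm" "0 < Nf" "0 < R0" "0 < B" "0 < lam"
  defines "\<epsilon> \<equiv> lam powr (1 / \<alpha> - 1)"
  shows "Nm * (R0 / Nm) powr (1 - \<alpha>) * (Nm * B / (\<epsilon> * Nf + Nm)) powr (- \<alpha>)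
       = Nf * (lam * R0 / Nf) powr (1 - \<alpha>) * (\<epsilon> * Nf * B / (\<epsilon> * Nf + Nm)) powr (- \<alpha>)"
proof -
  have e: "\<epsilon> > 0" using assms by simp
  have D: "\<epsilon> * Nf + Nm > 0" using e assms by (simp add: add_pos_pos)
  have le: "ln \<epsilon> = (1 / \<alpha> - 1) * ln lam" using assms by (simp add: ln_powr)
  have "ln (Nm * (R0 / Nm) powr (1 - \<alpha>) * (Nm * B / (\<epsilon> * Nf + Nm)) powr (- \<alpha>))
     = ln (Nf * (lam * R0 / Nf) powr (1 - \<alpha>) * (\<epsilon> * Nf * B / (\<epsilon> * Nf + Nm)) powr (- \<alpha>))"
    using assms e D by (simp add: ln_mult ln_div ln_powr le field_simps)
  then show ?thesis using assms e D by (subst (asm) ln_inj_iff) auto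
qed

lemma opt_char:
  fixes p a b c d x0 y0 B BM BS :: real
  assumes p: "0 < p" "p < 1" and ab: "0 < a" "0 < b" "0 < c" and xy0: "0 < x0" "0 < y0" "x0 + y0 = B"
    and foc: "a * x0 powr (p - 1) = b * y0 powr (p - 1)"
    and f: "\<And>x y. 0 \<le> x \<Longrightarrow> 0 \<le> y \<Longrightarrow> f x y = c * (a * x powr p + b * y powr p) + d"
  shows "opt_split f B BM BS \<longleftrightarrow> BM = x0 \<and> BS = y0"
proof
  assume o: "opt_split f B BM BS"
  then have h: "0 \<le> BM" "0 \<le> BS" "BM + BS = B" "f x0 y0 \<le> f BM BS"
    using xy0 unfolding opt_split_def by auto
  show "BM = x0 \<and> BS = y0"
  proof (rule ccontr)
    assume "\<not> (BM = x0 \<and> BS = y0)"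
    then have "BM \<noteq> x0" using h xy0 by auto
    then have "a * BM powr p + b * BS powr p < a * x0 powr p + b * y0 powr p"
      using key_split[OF p ab(1,2) xy0(1,2) foc h(1,2)] h xy0 by auto
    then have "f BM BS < f x0 y0" using f h xy0 ab by simp
    then show False using h by simp
  qed
next
  assume e: "BM = x0 \<and> BS = y0"
  show "opt_split f B BM BS"
    unfolding opt_split_def
  proof (intro conjI allI impI)
    fix x y :: real assume xy: "0 \<le> x" "0 \<le> y" "x + y = B"
    show "f x y \<le> f BM BS"
    proof (cases "x = x0")
      case True then have "y = y0" using xy xy0 by simp
      then show ?thesis using True e by simp
    next
      case False
      then have "a * x powr p + b * y powr p < a * x0 powr p + b * y0 powr p"
        using key_split[OF p ab(1,2) xy0(1,2) foc xy(1,2)] xy xy0 by auto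
      then show ?thesis using f xy xy0 e ab by simp
    qed
  qed (use e xy0 in auto)
qed

lemma welfare_rep:
  fixes \<alpha> Nm Nf R0 IS lam x y :: real
  assumes "0 < \<alpha>" "\<alpha> < 1" "0 < Nm" "0 < Nf" "0 < R0" "0 < lam" "0 \<le> x" "0 \<le> y"
  shows "welfare_split \<alpha> Nm Nf R0 IS lam x y =
     1 * ((Nm * (R0 / Nm) powr (1 - \<alpha>) / (1 - \<alpha>)) * x powr (1 - \<alpha>)
      + (Nf * (lam * R0 / Nf) powr (1 - \<alpha>) / (1 - \<alpha>)) * y powr (1 - \<alpha>)) + (- IS * lam)"
proof -
  have 1: "(x * R0 / Nm) powr (1 - \<alpha>) = x powr (1 - \<alpha>) * (R0 / Nm) powr (1 - \<alpha>)"
    using powr_mult[of x "R0 / Nm" "1 - \<alpha>"] assms by simp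
  have 2: "(lam * y * R0 / Nf) powr (1 - \<alpha>) = y powr (1 - \<alpha>) * (lam * R0 / Nf) powr (1 - \<alpha>)"
    using powr_mult[of y "lam * R0 / Nf" "1 - \<alpha>"] assms by (simp add: ac_simps)
  show ?thesis unfolding welfare_split_def util_def 1 2
    using assms by (simp add: field_simps)
qed

lemma rev_term:
  fixes \<alpha> c N x :: real
  assumes "0 \<le> x" "0 < c" "0 < N"
  shows "c * x * (x * (c / N)) powr (- \<alpha>) = N * (c / N) powr (1 - \<alpha>) * x powr (1 - \<alpha>)"
proof (cases "x = 0")
  case True then show ?thesis by simp
next
  case False
  then have x: "x > 0" using assms by simp
  have "c * x * (x * (c / N)) powr (- \<alpha>) = (c / N) * (c / N) powr (- \<alpha>) * N * (x * x powr (- \<alpha>))"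
    using assms x powr_mult[of x "c / N" "- \<alpha>"] by simp
  also have "(c / N) * (c / N) powr (- \<alpha>) = (c / N) powr (1 - \<alpha>)"
    using powr_mult_base[of "c / N" "- \<alpha>"] assms by simp
  also have "x * x powr (- \<alpha>) = x powr (1 - \<alpha>)"
    using x by (simp add: powr_mult_base)
  finally show ?thesis by simp
qed

lemma revenue_rep:
  fixes \<alpha> Nm Nf R0 IS lam x y :: real
  assumes "0 < \<alpha>" "\<alpha> < 1" "0 < Nm" "0 < Nf" "0 < R0" "0 < lam" "0 \<le> x" "0 \<le> y"
  shows "revenue_split \<alpha> Nm Nf R0 IS lam x y =
     (1 - \<alpha>) * ((Nm * (R0 / Nm) powr (1 - \<alpha>) / (1 - \<alpha>)) * x powr (1 - \<alpha>)
      + (Nf * (lam * R0 / Nf) powr (1 - \<alpha>) / (1 - \<alpha>)) * y powr (1 - \<alpha>)) + (- IS * lam)"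
proof -
  have 1: "R0 * x * (x * R0 / Nm) powr (- \<alpha>) = Nm * (R0 / Nm) powr (1 - \<alpha>) * x powr (1 - \<alpha>)"
    using rev_term[of x R0 Nm \<alpha>] assms by simp
  have 2: "R0 * lam * y * (lam * y * R0 / Nf) powr (- \<alpha>) = Nf * (lam * R0 / Nf) powr (1 - \<alpha>) * y powr (1 - \<alpha>)"
    using rev_term[of y "lam * R0" Nf \<alpha>] assms by (simp add: ac_simps)
  have nz: "1 - \<alpha> \<noteq> 0" using assms by simp
  show ?thesis unfolding revenue_split_def 1 2 using nz by (simp add: distrib_left)
qed

lemma part1:
  fixes \<alpha> Nm Nf R0 B IS lam :: real
  assumes as: "0 < \<alpha>" "\<alpha> < 1" "0 < Nm" "0 < Nf" "0 < R0" "0 < B" "1 < lam"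
  shows "let \<epsilon> = lam powr (1 / \<alpha> - 1);
            BS0 = \<epsilon> * Nf * B / (\<epsilon> * Nf + Nm);
            BM0 = Nm * B / (\<epsilon> * Nf + Nm)
        in (\<forall>BM BS. opt_split (welfare_split \<alpha> Nm Nf R0 IS lam) B BM BS
                       \<longleftrightarrow> BM = BM0 \<and> BS = BS0) \<and>
           (\<forall>BM BS. opt_split (revenue_split \<alpha> Nm Nf R0 IS lam) B BM BS
                       \<longleftrightarrow> BM = BM0 \<and> BS = BS0)"
proof -
  define \<epsilon> where "\<epsilon> = lam powr (1 / \<alpha> - 1)"
  define x0 where "x0 = Nm * B / (\<epsilon> * Nf + Nm)"
  define y0 where "y0 = \<epsilon> * Nf * B / (\<epsilon> * Nf + Nm)"
  define a where "a = Nm * (R0 / Nm) powr (1 - \<alpha>) / (1 - \<alpha>)"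
  define b where "b = Nf * (lam * R0 / Nf) powr (1 - \<alpha>) / (1 - \<alpha>)"
  have lam0: "0 < lam" using as by simp
  have e: "\<epsilon> > 0" using as unfolding \<epsilon>_def by simp
  have D: "\<epsilon> * Nf + Nm > 0" using e as by (simp add: add_pos_pos)
  have p: "0 < 1 - \<alpha>" "1 - \<alpha> < 1" using as by auto
  have ab: "0 < a" "0 < b" "0 < (1::real)" "0 < 1 - \<alpha>" using as unfolding a_def b_def by auto
  have s: "x0 + y0 = B"
  proof -
    have "x0 + y0 = B * (\<epsilon> * Nf + Nm) / (\<epsilon> * Nf + Nm)"
      unfolding x0_def y0_def by (simp add: add_divide_distrib[symmetric] algebra_simps)
    then show ?thesis using D by simp
  qed
  have xy0: "0 < x0" "0 < y0" "x0 + y0 = B"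
    using as e D s unfolding x0_def y0_def by auto
  have pm: "(1 - \<alpha>) - 1 = - \<alpha>" by simp
  have foc: "a * x0 powr ((1 - \<alpha>) - 1) = b * y0 powr ((1 - \<alpha>) - 1)"
    unfolding pm a_def b_def x0_def y0_def
    using foc_eq[OF as(1-6) lam0] unfolding \<epsilon>_def[symmetric] by simp
  have fw: "\<And>x y. 0 \<le> x \<Longrightarrow> 0 \<le> y \<Longrightarrow> welfare_split \<alpha> Nm Nf R0 IS lam x y
          = 1 * (a * x powr (1 - \<alpha>) + b * y powr (1 - \<alpha>)) + (- IS * lam)"
    unfolding a_def b_def using welfare_rep[OF as(1-5) lam0] by blast
  have fr: "\<And>x y. 0 \<le> x \<Longrightarrow> 0 \<le> y \<Longrightarrow> revenue_split \<alpha> Nm Nf R0 IS lam x y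
          = (1 - \<alpha>) * (a * x powr (1 - \<alpha>) + b * y powr (1 - \<alpha>)) + (- IS * lam)"
    unfolding a_def b_def using revenue_rep[OF as(1-5) lam0] by blast
  show ?thesis
    unfolding Let_def \<epsilon>_def[symmetric] x0_def[symmetric] y0_def[symmetric]
    using opt_char[OF p ab(1,2,3) xy0 foc fw] opt_char[OF p ab(1,2,4) xy0 foc fr]
    by blast
qed

lemma deriv_F:
  fixes \<alpha> Nm Nf K IS lam :: real
  assumes "0 < Nm" "0 < Nf" "0 < lam"
  shows "((\<lambda>l. K * (Nm + l powr (1 / \<alpha> - 1) * Nf) powr \<alpha> - IS * l) has_real_derivative
     K * (\<alpha> * (Nm + lam powr (1 / \<alpha> - 1) * Nf) powr (\<alpha> - 1) * ((1 / \<alpha> - 1) * lam powr (1 / \<alpha> - 2) * Nf)) - IS) (at lam)"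
proof -
  have pos: "0 < Nm + lam powr (1 / \<alpha> - 1) * Nf" using assms by (simp add: add_pos_nonneg)
  have inner: "((\<lambda>l. Nm + l powr (1 / \<alpha> - 1) * Nf) has_real_derivative
      (1 / \<alpha> - 1) * lam powr (1 / \<alpha> - 1 - 1) * Nf) (at lam)"
    using has_real_derivative_powr[OF assms(3), of "1 / \<alpha> - 1"] assms
    by (auto intro!: derivative_eq_intros)
  have qq: "1 / \<alpha> - 1 - 1 = 1 / \<alpha> - 2" by simp
  have outer: "((\<lambda>l. (Nm + l powr (1 / \<alpha> - 1) * Nf) powr \<alpha>) has_real_derivative
      \<alpha> * (Nm + lam powr (1 / \<alpha> - 1) * Nf) powr (\<alpha> - 1) * ((1 / \<alpha> - 1) * lam powr (1 / \<alpha> - 2) * Nf)) (at lam)"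
    using DERIV_chain2[OF has_real_derivative_powr[OF pos, of \<alpha>] inner] unfolding qq .
  show ?thesis
    by (rule derivative_eq_intros outer | simp)+
qed

lemma alg1: "K * (a * Y * (q * X * N)) - I = (0::real) \<Longrightarrow> K * (a * q) * (N * X * Y) = I"
  by (simp add: algebra_simps)

lemma alg2: "(a::real) \<noteq> 1 \<Longrightarrow> (1 / (1 - a)) * C * (1 - a) * (N * X * Y) = I \<Longrightarrow> N * C * X * Y = I"
proof -
  assume nz: "a \<noteq> 1" and h: "(1 / (1 - a)) * C * (1 - a) * (N * X * Y) = I"
  have "(1 / (1 - a)) * C * (1 - a) = C" using nz by simp
  then show ?thesis using h by (simp add: mult_ac)
qed

lemma alg3: "C * b * (N * X * Y) = (I::real) \<Longrightarrow> b * (N * C * X * Y) = I"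
  by (simp only: mult_ac)

lemma alg4: "(a::real) \<noteq> 1 \<Longrightarrow> (1 - a) * ((1 / (1 - a)) * C * F - I * l) = C * F - (1 - a) * I * l"
proof -
  assume nz: "a \<noteq> 1"
  have "(1 - a) * ((1 / (1 - a)) * C * F) = C * F" using nz by simp
  then show ?thesis by (simp add: right_diff_distrib mult.assoc)
qed

lemma focL:
  fixes \<alpha> Nm Nf K IS l0 :: real
  assumes "0 < Nm" "0 < Nf" "1 < l0"
    and mx: "\<And>y. 1 < y \<Longrightarrow> K * (Nm + y powr (1 / \<alpha> - 1) * Nf) powr \<alpha> - IS * y
               \<le> K * (Nm + l0 powr (1 / \<alpha> - 1) * Nf) powr \<alpha> - IS * l0"
  shows "K * (\<alpha> * (1 / \<alpha> - 1)) * (Nf * l0 powr (1 / \<alpha> - 2) * (Nf * l0 powr (1 / \<alpha> - 1) + Nm) powr (\<alpha> - 1)) = IS"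
proof -
  have "K * (\<alpha> * (Nm + l0 powr (1 / \<alpha> - 1) * Nf) powr (\<alpha> - 1) * ((1 / \<alpha> - 1) * l0 powr (1 / \<alpha> - 2) * Nf)) - IS = 0"
  proof (rule DERIV_local_max[OF deriv_F[of Nm Nf l0 K \<alpha> IS]])
    show "0 < l0 - 1" using assms by simp
    show "\<forall>y. \<bar>l0 - y\<bar> < l0 - 1 \<longrightarrow>
      K * (Nm + y powr (1 / \<alpha> - 1) * Nf) powr \<alpha> - IS * y \<le> K * (Nm + l0 powr (1 / \<alpha> - 1) * Nf) powr \<alpha> - IS * l0"
      using mx by (auto simp: abs_if split: if_splits)
  qed (use assms in auto)
  moreover have "Nf * l0 powr (1 / \<alpha> - 1) + Nm = Nm + l0 powr (1 / \<alpha> - 1) * Nf" by simp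
  ultimately show ?thesis by (simp only:) (rule alg1)
qed


theorem theorem7:
  fixes \<alpha> Nm Nf R0 B IS :: real
  assumes "0 < \<alpha>" "\<alpha> < 1" "0 < Nm" "0 < Nf" "0 < R0" "0 < B" "0 < IS"
  shows
    "(\<forall>lam > 1.
        let \<epsilon> = lam powr (1 / \<alpha> - 1);
            BS0 = \<epsilon> * Nf * B / (\<epsilon> * Nf + Nm);
            BM0 = Nm * B / (\<epsilon> * Nf + Nm)
        in (\<forall>BM BS. opt_split (welfare_split \<alpha> Nm Nf R0 IS lam) B BM BS
                       \<longleftrightarrow> BM = BM0 \<and> BS = BS0) \<and>
           (\<forall>BM BS. opt_split (revenue_split \<alpha> Nm Nf R0 IS lam) B BM BS
                       \<longleftrightarrow> BM = BM0 \<and> BS = BS0))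
     \<and> (\<forall>lsw. is_max_nonneg (W_sw \<alpha> Nm Nf R0 B IS) lsw \<longrightarrow>
          lsw = 0 \<or>
          (lsw > 1 \<and>
           Nf * (B * R0) powr (1 - \<alpha>) * lsw powr (1 / \<alpha> - 2)
             * (Nf * lsw powr (1 / \<alpha> - 1) + Nm) powr (\<alpha> - 1) = IS))
     \<and> (\<forall>lsw lrev. is_max_nonneg (W_sw \<alpha> Nm Nf R0 B IS) lsw \<longrightarrow>
          is_max_nonneg (S_rev \<alpha> Nm Nf R0 B IS) lrev \<longrightarrow>
          lsw > 1 \<longrightarrow> lrev > 1 \<longrightarrow> lsw > lrev)"
  proof -
  note as = assms
  define C where "C = (B * R0) powr (1 - \<alpha>)"
  define Q where "Q = 1 / \<alpha> - 1"
  have C0: "C > 0" using as unfolding C_def by simp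
  have aq: "\<alpha> * (1 / \<alpha> - 1) = 1 - \<alpha>" using as by (simp add: field_simps)
  have Wgt: "\<And>y. 1 < y \<Longrightarrow> W_sw \<alpha> Nm Nf R0 B IS y = (1 / (1 - \<alpha>)) * C * (Nm + y powr (1 / \<alpha> - 1) * Nf) powr \<alpha> - IS * y"
    unfolding W_sw_def C_def by simp
  have Sgt: "\<And>y. 1 < y \<Longrightarrow> S_rev \<alpha> Nm Nf R0 B IS y = C * (Nm + y powr (1 / \<alpha> - 1) * Nf) powr \<alpha> - IS * y"
    unfolding S_rev_def C_def by simp
  have focW: "Nf * C * l powr (1 / \<alpha> - 2) * (Nf * l powr (1 / \<alpha> - 1) + Nm) powr (\<alpha> - 1) = IS"
    if m: "is_max_nonneg (W_sw \<alpha> Nm Nf R0 B IS) l" and l1: "l > 1" for l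
  proof -
    have h: "(1 / (1 - \<alpha>)) * C * (\<alpha> * (1 / \<alpha> - 1)) * (Nf * l powr (1 / \<alpha> - 2) * (Nf * l powr (1 / \<alpha> - 1) + Nm) powr (\<alpha> - 1)) = IS"
    proof (rule focL[OF as(3,4) l1])
      fix y :: real assume y1: "1 < y"
      have "W_sw \<alpha> Nm Nf R0 B IS y \<le> W_sw \<alpha> Nm Nf R0 B IS l"
        using m y1 unfolding is_max_nonneg_def by simp
      then show "1 / (1 - \<alpha>) * C * (Nm + y powr (1 / \<alpha> - 1) * Nf) powr \<alpha> - IS * y
         \<le> 1 / (1 - \<alpha>) * C * (Nm + l powr (1 / \<alpha> - 1) * Nf) powr \<alpha> - IS * l"
        using Wgt[OF y1] Wgt[OF l1] by simp
    qed
    have nz: "\<alpha> \<noteq> 1" using as by simp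
    show ?thesis using alg2[OF nz h[unfolded aq]] .
  qed
  have focS: "(1 - \<alpha>) * (Nf * C * l powr (1 / \<alpha> - 2) * (Nf * l powr (1 / \<alpha> - 1) + Nm) powr (\<alpha> - 1)) = IS"
    if m: "is_max_nonneg (S_rev \<alpha> Nm Nf R0 B IS) l" and l1: "l > 1" for l
  proof -
    have "C * (\<alpha> * (1 / \<alpha> - 1)) * (Nf * l powr (1 / \<alpha> - 2) * (Nf * l powr (1 / \<alpha> - 1) + Nm) powr (\<alpha> - 1)) = IS"
    proof (rule focL[OF as(3,4) l1])
      fix y :: real assume y1: "1 < y"
      have "S_rev \<alpha> Nm Nf R0 B IS y \<le> S_rev \<alpha> Nm Nf R0 B IS l"
        using m y1 unfolding is_max_nonneg_def by simp
      then show "C * (Nm + y powr (1 / \<alpha> - 1) * Nf) powr \<alpha> - IS * y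
         \<le> C * (Nm + l powr (1 / \<alpha> - 1) * Nf) powr \<alpha> - IS * l"
        using Sgt[OF y1] Sgt[OF l1] by simp
    qed
    then show ?thesis unfolding aq by (rule alg3)
  qed
  have P1: "\<forall>lam > 1.
        let \<epsilon> = lam powr (1 / \<alpha> - 1);
            BS0 = \<epsilon> * Nf * B / (\<epsilon> * Nf + Nm);
            BM0 = Nm * B / (\<epsilon> * Nf + Nm)
        in (\<forall>BM BS. opt_split (welfare_split \<alpha> Nm Nf R0 IS lam) B BM BS
                       \<longleftrightarrow> BM = BM0 \<and> BS = BS0) \<and>
           (\<forall>BM BS. opt_split (revenue_split \<alpha> Nm Nf R0 IS lam) B BM BS
                       \<longleftrightarrow> BM = BM0 \<and> BS = BS0)"
    using part1[OF as(1-6)] by blast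
  have P2: "\<forall>lsw. is_max_nonneg (W_sw \<alpha> Nm Nf R0 B IS) lsw \<longrightarrow>
          lsw = 0 \<or>
          (lsw > 1 \<and>
           Nf * (B * R0) powr (1 - \<alpha>) * lsw powr (1 / \<alpha> - 2)
             * (Nf * lsw powr (1 / \<alpha> - 1) + Nm) powr (\<alpha> - 1) = IS)"
  proof (intro allI impI)
    fix lsw assume m: "is_max_nonneg (W_sw \<alpha> Nm Nf R0 B IS) lsw"
    show "lsw = 0 \<or>
          (lsw > 1 \<and>
           Nf * (B * R0) powr (1 - \<alpha>) * lsw powr (1 / \<alpha> - 2)
             * (Nf * lsw powr (1 / \<alpha> - 1) + Nm) powr (\<alpha> - 1) = IS)"
    proof (cases "lsw > 1")
      case True
      then show ?thesis using focW[OF m True] unfolding C_def by simp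
    next
      case False
      have "lsw \<ge> 0" using m unfolding is_max_nonneg_def by simp
      moreover have "W_sw \<alpha> Nm Nf R0 B IS 0 \<le> W_sw \<alpha> Nm Nf R0 B IS lsw"
        using m unfolding is_max_nonneg_def by simp
      ultimately have "lsw = 0" using False as unfolding W_sw_def
        by (auto split: if_splits simp: mult_le_0_iff)
      then show ?thesis by simp
    qed
  qed
  have P3: "\<forall>lsw lrev. is_max_nonneg (W_sw \<alpha> Nm Nf R0 B IS) lsw \<longrightarrow>
          is_max_nonneg (S_rev \<alpha> Nm Nf R0 B IS) lrev \<longrightarrow>
          lsw > 1 \<longrightarrow> lrev > 1 \<longrightarrow> lsw > lrev"
  proof (intro allI impI)
    fix lsw lrev
    assume mw: "is_max_nonneg (W_sw \<alpha> Nm Nf R0 B IS) lsw"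
      and ms: "is_max_nonneg (S_rev \<alpha> Nm Nf R0 B IS) lrev"
      and g1: "lsw > 1" and g2: "lrev > 1"
    define Fs where "Fs = (Nm + lsw powr (1 / \<alpha> - 1) * Nf) powr \<alpha>"
    define Fr where "Fr = (Nm + lrev powr (1 / \<alpha> - 1) * Nf) powr \<alpha>"
    have "W_sw \<alpha> Nm Nf R0 B IS lrev \<le> W_sw \<alpha> Nm Nf R0 B IS lsw"
      using mw g2 unfolding is_max_nonneg_def by simp
    then have w: "(1 / (1 - \<alpha>)) * C * Fr - IS * lrev \<le> (1 / (1 - \<alpha>)) * C * Fs - IS * lsw"
      using Wgt[OF g1] Wgt[OF g2] unfolding Fs_def Fr_def by simp
    have "S_rev \<alpha> Nm Nf R0 B IS lsw \<le> S_rev \<alpha> Nm Nf R0 B IS lrev"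
      using ms g1 unfolding is_max_nonneg_def by simp
    then have sr: "C * Fs - IS * lsw \<le> C * Fr - IS * lrev"
      using Sgt[OF g1] Sgt[OF g2] unfolding Fs_def Fr_def by simp
    have "(1 - \<alpha>) * ((1 / (1 - \<alpha>)) * C * Fr - IS * lrev) \<le> (1 - \<alpha>) * ((1 / (1 - \<alpha>)) * C * Fs - IS * lsw)"
      using w as by (intro mult_left_mono) auto
    moreover have "\<alpha> \<noteq> 1" using as by simp
    ultimately have w2: "C * Fr - (1 - \<alpha>) * IS * lrev \<le> C * Fs - (1 - \<alpha>) * IS * lsw"
      using alg4[of \<alpha> C Fr IS lrev] alg4[of \<alpha> C Fs IS lsw] by simp
    have "0 \<le> (\<alpha> * IS) * (lsw - lrev)" using w2 sr by (simp add: algebra_simps)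
    moreover have "\<alpha> * IS > 0" using as by simp
    ultimately have ge: "lsw \<ge> lrev" by (simp add: zero_le_mult_iff)
    show "lsw > lrev"
    proof (rule ccontr)
      assume "\<not> lsw > lrev"
      then have eq: "lsw = lrev" using ge by simp
      have a: "Nf * C * lsw powr (1 / \<alpha> - 2) * (Nf * lsw powr (1 / \<alpha> - 1) + Nm) powr (\<alpha> - 1) = IS"
        by (rule focW[OF mw g1])
      have b: "(1 - \<alpha>) * (Nf * C * lsw powr (1 / \<alpha> - 2) * (Nf * lsw powr (1 / \<alpha> - 1) + Nm) powr (\<alpha> - 1)) = IS"
        using focS[OF ms g2] eq by simp
      from a b have "(1 - \<alpha>) * IS = IS" by simp
      then show False using as by (simp add: algebra_simps)
    qed
  qed
  show ?thesis using P1 P2 P3 by blast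
qed

end
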